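(* Let $n\ge 3$ and let $\mathcal X$ be an $(n,n-2)$-set of $\mathrm{PG}(n,q)$. Then $$|\mathcal X|\le \left(\frac{n!\,(q^{n+1}-1)(q^n-1)}{(q-1)(q^2-1)}\right)^{\frac{1}{n-1}}+n-2 .$$
   Context: $q$ is a prime power and $\mathrm{PG}(n,q)$ is the $n$-dimensional projective space over $\mathbb F_q$. For integers $r,s$, an $(r,s)$-set of $\mathrm{PG}(n,q)$ is a set $\mathcal X$ of points such that: (i) every $s$-dimensional projective subspace contains at most $r$ points of $\mathcal X$; (ii) $\mathcal X$ spans $\mathrm{PG}(n,q)$; (iii) some $(s+1)$-dimensional projective subspace contains $r+2$ points of $\mathcal X$. *)

theory Defs
  imports Complex_Main "HOL-Library.Function_Algebras"
begin

text \<open>PG(n,q) is modelled over a finite field 'a (so q = CARD('a) is a prime power).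
  The underlying vector space F_q^(n+1) consists of functions nat => 'a vanishing
  at indices greater than n (coordinates 0..n).  A projective s-subspace is a linear
  subspace of dimension s+1; a point is a projective 0-subspace (a 1-dimensional
  linear subspace), and a point P lies in a projective subspace W iff P is contained in W.\<close>

definition scl :: "'a::field \<Rightarrow> (nat \<Rightarrow> 'a) \<Rightarrow> (nat \<Rightarrow> 'a)" where
  "scl c v = (\<lambda>i. c * v i)"

definition vecs :: "nat \<Rightarrow> (nat \<Rightarrow> 'a::field) set" where
  "vecs n = {v. \<forall>i>n. v i = 0}"

definition proj_subspace :: "nat \<Rightarrow> nat \<Rightarrow> (nat \<Rightarrow> 'a::field) set \<Rightarrow> bool" where
  "proj_subspace n s W \<longleftrightarrow>
     W \<subseteq> vecs n \<and> module.subspace scl W \<and> vector_space.dim scl W = s + 1"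

definition PG_points :: "nat \<Rightarrow> (nat \<Rightarrow> 'a::field) set set" where
  "PG_points n = {P. proj_subspace n 0 P}"

definition pts_in :: "(nat \<Rightarrow> 'a::field) set set \<Rightarrow> (nat \<Rightarrow> 'a) set \<Rightarrow> nat" where
  "pts_in X W = card {P \<in> X. P \<subseteq> W}"

definition rs_set :: "nat \<Rightarrow> nat \<Rightarrow> nat \<Rightarrow> (nat \<Rightarrow> 'a::{finite,field}) set set \<Rightarrow> bool" where
  "rs_set n r s X \<longleftrightarrow>
     X \<subseteq> PG_points n \<and>
     (\<forall>W. proj_subspace n s W \<longrightarrow> pts_in X W \<le> r) \<and>
     module.span scl (\<Union>X) = vecs n \<and>
     (\<exists>W. proj_subspace n (s + 1) W \<and> pts_in X W \<ge> r + 2)"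

end

theory Submission imports Defs "HOL-Library.Cardinality" "HOL-Library.FuncSet" begin

interpretation V: vector_space "scl :: 'a::field \<Rightarrow> (nat \<Rightarrow> 'a) \<Rightarrow> (nat \<Rightarrow> 'a)"
  by unfold_locales (auto simp: scl_def fun_eq_iff algebra_simps)

lemma finite_vecs: "finite (vecs n :: (nat \<Rightarrow> 'a::{finite,field}) set)"
proof -
  have "vecs n = {f::nat\<Rightarrow>'a. \<forall>x. (x \<in> {..n} \<longrightarrow> f x \<in> UNIV) \<and> (x \<notin> {..n} \<longrightarrow> f x = 0)}"
    by (auto simp: vecs_def)
  then show ?thesis using finite_set_of_finite_funs[of "{..n}" "UNIV::'a set" 0] by simp
qed

lemma card_vecs: "card (vecs n :: (nat \<Rightarrow> 'a::{finite,field}) set) = CARD('a) ^ (n+1)"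
proof -
  have "bij_betw (\<lambda>f. restrict f {..n}) (vecs n :: (nat \<Rightarrow> 'a) set) (PiE {..n} (\<lambda>_. UNIV))"
  proof (rule bij_betw_byWitness[where f' = "\<lambda>g i. if i \<le> n then g i else (0::'a)"])
    show "\<forall>a\<in>vecs n. (\<lambda>i. if i \<le> n then restrict a {..n} i else 0) = (a :: nat \<Rightarrow> 'a)"
      by (auto simp: vecs_def fun_eq_iff)
    show "\<forall>a'\<in>{..n} \<rightarrow>\<^sub>E UNIV. restrict (\<lambda>i. if i \<le> n then a' i else (0::'a)) {..n} = a'"
      by (auto simp: fun_eq_iff PiE_def extensional_def)
    show "(\<lambda>f. restrict f {..n}) ` vecs n \<subseteq> {..n} \<rightarrow>\<^sub>E UNIV" by (intro image_subsetI) (simp only: restrict_PiE Pi_def, simp)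
    show "(\<lambda>g i. if i \<le> n then g i else 0) ` ({..n} \<rightarrow>\<^sub>E UNIV) \<subseteq> (vecs n :: (nat \<Rightarrow> 'a) set)"
      by (auto simp: vecs_def)
  qed
  then have "card (vecs n :: (nat \<Rightarrow> 'a) set) = card (PiE {..n} (\<lambda>_. UNIV :: 'a set))"
    by (rule bij_betw_same_card)
  also have "\<dots> = CARD('a) ^ (n+1)" by (simp add: card_PiE)
  finally show ?thesis .
qed

lemma subspace_vecs: "V.subspace (vecs n :: (nat \<Rightarrow> 'a::field) set)"
  by (auto simp: V.subspace_def vecs_def scl_def)

lemma card_span:
  fixes B :: "(nat \<Rightarrow> 'a::{finite,field}) set"
  assumes fin: "finite B" and ind: "V.independent B"
  shows "card (V.span B) = CARD('a) ^ card B"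
proof -
  define g where "g c = (\<Sum>b\<in>B. scl (c b) b)" for c :: "(nat \<Rightarrow> 'a) \<Rightarrow> 'a"
  have sp: "V.span B = range g" unfolding g_def by (rule V.span_finite[OF fin])
  have "range g = g ` (PiE B (\<lambda>_. UNIV))"
  proof
    show "range g \<subseteq> g ` (PiE B (\<lambda>_. UNIV))"
    proof
      fix y assume "y \<in> range g"
      then obtain c where y: "y = g c" by auto
      have "g c = g (restrict c B)" unfolding g_def by (intro sum.cong refl) simp
      then show "y \<in> g ` (PiE B (\<lambda>_. UNIV))" using y by auto
    qed
  qed auto
  moreover have "inj_on g (PiE B (\<lambda>_. UNIV))"
  proof (rule inj_onI)
    fix c1 c2 assume c1: "c1 \<in> PiE B (\<lambda>_. UNIV)" and c2: "c2 \<in> PiE B (\<lambda>_. UNIV)" and e: "g c1 = g c2"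
    have "(\<Sum>b\<in>B. scl (c1 b - c2 b) b) = g c1 - g c2"
      unfolding g_def by (simp add: V.scale_left_diff_distrib sum_subtractf)
    also have "\<dots> = 0" using e by simp
    finally have z: "(\<Sum>b\<in>B. scl (c1 b - c2 b) b) = 0" .
    have "\<forall>b\<in>B. c1 b - c2 b = 0"
      using V.independentD[OF ind fin order_refl, of "\<lambda>b. c1 b - c2 b", OF z] by blast
    then show "c1 = c2" by (intro PiE_ext[OF c1 c2]) simp
  qed
  ultimately have "card (V.span B) = card (PiE B (\<lambda>_. UNIV :: 'a set))"
    using sp by (simp add: card_image)
  also have "\<dots> = CARD('a) ^ card B" by (simp add: card_PiE fin)
  finally show ?thesis .
qed

lemma card_subspace:
  fixes W :: "(nat \<Rightarrow> 'a::{finite,field}) set"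
  assumes "W \<subseteq> vecs n" "V.subspace W"
  shows "card W = CARD('a) ^ V.dim W"
proof -
  obtain B where B: "B \<subseteq> W" "V.independent B" "W \<subseteq> V.span B" "card B = V.dim W"
    by (rule V.basis_exists)
  have "V.span B \<subseteq> W" using B(1) assms(2) by (rule V.span_minimal)
  then have "V.span B = W" using B(3) by blast
  moreover have "finite B" using finite_subset[OF order_trans[OF B(1) assms(1)] finite_vecs] .
  ultimately show ?thesis using card_span[of B] B(2,4) by metis
qed

definition ilists :: "(nat \<Rightarrow> 'a::field) set \<Rightarrow> nat \<Rightarrow> (nat \<Rightarrow> 'a) list set" where
  "ilists S i = {xs. length xs = i \<and> set xs \<subseteq> S \<and> distinct xs \<and> V.independent (set xs)}"

lemma finite_ilists:
  fixes S :: "(nat \<Rightarrow> 'a::{finite,field}) set"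
  assumes "S \<subseteq> vecs n"
  shows "finite (ilists S i)"
proof -
  have "finite S" using finite_subset[OF assms finite_vecs] .
  then have "finite {xs. set xs \<subseteq> S \<and> length xs = i}" by (rule finite_lists_length_eq)
  then show ?thesis by (rule finite_subset[rotated]) (auto simp: ilists_def)
qed

lemma ilists_Suc:
  "ilists S (Suc i) = (\<Union>xs\<in>ilists S i. (\<lambda>x. x # xs) ` (S - V.span (set xs)))"
proof safe
  fix ys assume "ys \<in> ilists S (Suc i)"
  then obtain x xs where ys: "ys = x # xs" and l: "length xs = i" and "set ys \<subseteq> S" "distinct ys"
    "V.independent (set ys)"
    by (auto simp: ilists_def length_Suc_conv)
  then have "x \<in> S" "set xs \<subseteq> S" "x \<notin> set xs" "distinct xs" "V.independent (insert x (set xs))"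
    by simp_all
  then have "V.independent (set xs) \<and> x \<notin> V.span (set xs)"
    using V.independent_insert[of x "set xs"] by auto
  show "ys \<in> (\<Union>xs\<in>ilists S i. (\<lambda>x. x # xs) ` (S - V.span (set xs)))"
  proof (rule UN_I[of xs])
    show "xs \<in> ilists S i" using l \<open>set xs \<subseteq> S\<close> \<open>distinct xs\<close> \<open>V.independent (set xs) \<and> x \<notin> V.span (set xs)\<close>
      by (simp add: ilists_def)
    show "ys \<in> (\<lambda>x. x # xs) ` (S - V.span (set xs))" using ys \<open>x \<in> S\<close> \<open>V.independent (set xs) \<and> x \<notin> V.span (set xs)\<close> by blast
  qed
next
  fix xs x assume xs: "xs \<in> ilists S i" and x: "x \<in> S" "x \<notin> V.span (set xs)"
  then have "x \<notin> set xs" using V.span_base by blast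
  then show "x # xs \<in> ilists S (Suc i)"
    using xs x V.independent_insert[of x "set xs"] by (simp add: ilists_def)
qed

lemma card_ilists:
  fixes S :: "(nat \<Rightarrow> 'a::{finite,field}) set"
  assumes S: "S \<subseteq> vecs n" "V.subspace S"
  shows "card (ilists S i) = (\<Prod>j<i. card S - CARD('a) ^ j)"
proof (induction i)
  case 0
  have "ilists S 0 = {[]}" using V.independent_empty by (auto simp: ilists_def)
  then show ?case by simp
next
  case (Suc i)
  have fS: "finite S" using finite_subset[OF S(1) finite_vecs] .
  have eachc: "card ((\<lambda>x. x # xs) ` (S - V.span (set xs))) = card S - CARD('a) ^ i"
    if xs: "xs \<in> ilists S i" for xs
  proof -
    have sub: "V.span (set xs) \<subseteq> S" using xs S(2) by (intro V.span_minimal) (auto simp: ilists_def)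
    have "card (V.span (set xs)) = CARD('a) ^ i"
      using xs card_span[of "set xs"] by (auto simp: ilists_def distinct_card)
    moreover have "card ((\<lambda>x. x # xs) ` (S - V.span (set xs))) = card (S - V.span (set xs))"
      by (rule card_image) (auto simp: inj_on_def)
    ultimately show ?thesis using sub fS by (simp add: card_Diff_subset finite_subset)
  qed
  have "card (ilists S (Suc i)) = (\<Sum>xs\<in>ilists S i. card ((\<lambda>x. x # xs) ` (S - V.span (set xs))))"
    unfolding ilists_Suc
  proof (rule card_UN_disjoint)
    show "finite (ilists S i)" by (rule finite_ilists[OF S(1)])
    show "\<forall>xs\<in>ilists S i. finite ((\<lambda>x. x # xs) ` (S - V.span (set xs)))" using fS by simp
    show "\<forall>xs\<in>ilists S i. \<forall>ys\<in>ilists S i. xs \<noteq> ys \<longrightarrow>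
      (\<lambda>x. x # xs) ` (S - V.span (set xs)) \<inter> (\<lambda>x. x # ys) ` (S - V.span (set ys)) = {}" by auto
  qed
  also have "\<dots> = (\<Sum>xs\<in>ilists S i. card S - CARD('a) ^ i)"
    by (rule sum.cong) (auto simp: eachc)
  also have "\<dots> = card (ilists S i) * (card S - CARD('a) ^ i)" by simp
  finally show ?case using Suc.IH by simp
qed

lemma span_ilists:
  fixes W :: "(nat \<Rightarrow> 'a::{finite,field}) set"
  assumes W: "W \<subseteq> vecs n" "V.subspace W" "V.dim W = d" and xs: "xs \<in> ilists W d"
  shows "V.span (set xs) = W"
proof -
  have fW: "finite W" using finite_subset[OF W(1) finite_vecs] .
  have sub: "V.span (set xs) \<subseteq> W" using xs W(2) by (intro V.span_minimal) (auto simp: ilists_def)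
  have "card (V.span (set xs)) = CARD('a) ^ d"
    using xs card_span[of "set xs"] by (auto simp: ilists_def distinct_card)
  moreover have "card W = CARD('a) ^ d" using card_subspace[OF W(1,2)] W(3) by simp
  ultimately show ?thesis using card_subset_eq[OF fW sub] by simp
qed

lemma count_subspaces:
  "card {W :: (nat \<Rightarrow> 'a::{finite,field}) set. W \<subseteq> vecs n \<and> V.subspace W \<and> V.dim W = d}
     * (\<Prod>j<d. CARD('a) ^ d - CARD('a) ^ j) \<le> (\<Prod>j<d. CARD('a) ^ (n+1) - CARD('a) ^ j)"
proof -
  define WW where "WW = {W :: (nat \<Rightarrow> 'a) set. W \<subseteq> vecs n \<and> V.subspace W \<and> V.dim W = d}"
  have finWW: "finite WW"
    by (rule finite_subset[of _ "Pow (vecs n)"]) (auto simp: WW_def finite_vecs)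
  have cW: "card (ilists W d) = (\<Prod>j<d. CARD('a) ^ d - CARD('a) ^ j)" if "W \<in> WW" for W
    using that card_ilists[of W n d] card_subspace[of W n] by (simp add: WW_def)
  have "card (\<Union>W\<in>WW. ilists W d) = (\<Sum>W\<in>WW. card (ilists W d))"
  proof (rule card_UN_disjoint[OF finWW])
    show "\<forall>W\<in>WW. finite (ilists W d)" unfolding WW_def using finite_ilists by blast
    show "\<forall>W1\<in>WW. \<forall>W2\<in>WW. W1 \<noteq> W2 \<longrightarrow> ilists W1 d \<inter> ilists W2 d = {}"
    proof (intro ballI impI)
      fix W1 W2 assume a: "W1 \<in> WW" "W2 \<in> WW" "W1 \<noteq> W2"
      show "ilists W1 d \<inter> ilists W2 d = {}"
      proof (rule ccontr)
        assume "ilists W1 d \<inter> ilists W2 d \<noteq> {}"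
        then obtain xs where "xs \<in> ilists W1 d" "xs \<in> ilists W2 d" by blast
        then have "V.span (set xs) = W1" "V.span (set xs) = W2"
          using span_ilists[of W1 n d xs] span_ilists[of W2 n d xs] a by (simp_all add: WW_def)
        then show False using a(3) by simp
      qed
    qed
  qed
  also have "\<dots> = card WW * (\<Prod>j<d. CARD('a) ^ d - CARD('a) ^ j)" using cW by simp
  finally have eq: "card (\<Union>W\<in>WW. ilists W d) = card WW * (\<Prod>j<d. CARD('a) ^ d - CARD('a) ^ j)" .
  have "(\<Union>W\<in>WW. ilists W d) \<subseteq> ilists (vecs n) d" by (auto simp: WW_def ilists_def)
  then have "card (\<Union>W\<in>WW. ilists W d) \<le> card (ilists (vecs n :: (nat \<Rightarrow> 'a) set) d)"
    by (rule card_mono[OF finite_ilists[OF order_refl]])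
  also have "\<dots> = (\<Prod>j<d. CARD('a) ^ (n+1) - CARD('a) ^ j)"
    using card_ilists[OF order_refl subspace_vecs, of n d, where 'a='a] card_vecs[of n, where 'a='a] by simp
  finally show ?thesis using eq unfolding WW_def by simp
qed

lemma Rrec:
  fixes x :: real
  shows "(\<Prod>i<d. x^(i+1+2) - 1) * ((x-1)*(x^2-1)) = (\<Prod>i<d. x^(i+1) - 1) * ((x^(d+1)-1)*(x^(d+2)-1))"
proof (induction d)
  case 0
  then show ?case by (simp add: power2_eq_square)
next
  case (Suc d)
  have e1: "(\<Prod>i<Suc d. x^(i+1+2) - 1) = (\<Prod>i<d. x^(i+1+2) - 1) * (x^(d+1+2) - 1)"
    by (rule prod.lessThan_Suc)
  have e2: "(\<Prod>i<Suc d. x^(i+1) - 1) = (\<Prod>i<d. x^(i+1) - 1) * (x^(d+1) - 1)"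
    by (rule prod.lessThan_Suc)
  have e3: "Suc d + 1 = d + 2" "Suc d + 2 = d + 1 + 2" by simp_all
  have "(\<Prod>i<Suc d. x^(i+1+2) - 1) * ((x-1)*(x^2-1))
      = ((\<Prod>i<d. x^(i+1+2) - 1) * ((x-1)*(x^2-1))) * (x^(d+1+2) - 1)"
    unfolding e1 by (simp only: mult_ac)
  also have "\<dots> = (\<Prod>i<d. x^(i+1) - 1) * ((x^(d+1)-1)*(x^(d+2)-1)) * (x^(d+1+2) - 1)"
    unfolding Suc.IH ..
  also have "\<dots> = (\<Prod>i<Suc d. x^(i+1) - 1) * ((x^(Suc d+1)-1)*(x^(Suc d+2)-1))"
    unfolding e2 e3 by (simp only: mult_ac)
  finally show ?case .
qed

lemma Pfac:
  fixes q :: nat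
  assumes "q \<ge> 1"
  shows "real (\<Prod>j<d. q^(d+c) - q^j) = (\<Prod>j<d. real q^j) * (\<Prod>i<d. real q^(i+1+c) - 1)"
proof -
  have "real (\<Prod>j<d. q^(d+c) - q^j) = (\<Prod>j<d. real q^(d+c) - real q^j)"
    unfolding of_nat_prod
  proof (rule prod.cong[OF refl])
    fix j assume "j \<in> {..<d}"
    then have "q^j \<le> q^(d+c)" using assms by (intro power_increasing) auto
    then show "real (q^(d+c) - q^j) = real q^(d+c) - real q^j" by (simp add: of_nat_diff)
  qed
  also have "\<dots> = (\<Prod>j<d. real q^j * (real q^(d+c-j) - 1))"
  proof (rule prod.cong[OF refl])
    fix j assume "j \<in> {..<d}"
    then have "real q^(d+c) = real q^j * real q^(d+c-j)" by (simp flip: power_add)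
    then show "real q^(d+c) - real q^j = real q^j * (real q^(d+c-j) - 1)" by (simp add: algebra_simps)
  qed
  also have "\<dots> = (\<Prod>j<d. real q^j) * (\<Prod>j<d. real q^(d+c-j) - 1)" by (rule prod.distrib)
  also have "(\<Prod>j<d. real q^(d+c-j) - 1) = (\<Prod>j<d. real q^((d - Suc j)+1+c) - 1)"
    by (rule prod.cong[OF refl]) (auto simp: Suc_diff_Suc)
  also have "\<dots> = (\<Prod>i<d. real q^(i+1+c) - 1)"
    by (rule prod.nat_diff_reindex)
  finally show ?thesis .
qed

lemma card_field_ge2: "CARD('a::{finite,field}) \<ge> 2"
proof -
  have "card {0::'a, 1} = 2" by simp
  moreover have "card {0::'a, 1} \<le> CARD('a)" by (rule card_mono) auto
  ultimately show ?thesis by simp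
qed

lemma count_bound:
  assumes n: "n \<ge> 2"
  shows "real (card {W :: (nat \<Rightarrow> 'a::{finite,field}) set. proj_subspace n (n-2) W}) \<le>
    (real CARD('a) ^ (n + 1) - 1) * (real CARD('a) ^ n - 1) / ((real CARD('a) - 1) * (real CARD('a) ^ 2 - 1))"
proof -
  define q where "q = CARD('a)"
  have q2: "q \<ge> 2" unfolding q_def by (rule card_field_ge2)
  define d where "d = n - 1"
  have nd: "n + 1 = d + 2" "n = d + 1" "n - 2 + 1 = d" using n by (auto simp: d_def)
  define N where "N = card {W :: (nat \<Rightarrow> 'a) set. proj_subspace n (n-2) W}"
  have seteq: "{W :: (nat \<Rightarrow> 'a) set. proj_subspace n (n-2) W} = {W. W \<subseteq> vecs n \<and> V.subspace W \<and> V.dim W = d}"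
    by (simp only: proj_subspace_def nd(3))
  have "card {W :: (nat \<Rightarrow> 'a) set. W \<subseteq> vecs n \<and> V.subspace W \<and> V.dim W = d} * (\<Prod>j<d. q ^ d - q ^ j) \<le> (\<Prod>j<d. q ^ (n+1) - q ^ j)"
    using count_subspaces[of n d, where 'a='a] unfolding q_def .
  then have "N * (\<Prod>j<d. q ^ d - q ^ j) \<le> (\<Prod>j<d. q ^ (d+2) - q ^ j)"
    unfolding N_def seteq nd(1) .
  then have "real (N * (\<Prod>j<d. q ^ (d+0) - q ^ j)) \<le> real (\<Prod>j<d. q ^ (d+2) - q ^ j)"
    unfolding add_0_right of_nat_le_iff .
  then have "real N * real (\<Prod>j<d. q ^ (d+0) - q ^ j) \<le> real (\<Prod>j<d. q ^ (d+2) - q ^ j)"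
    unfolding of_nat_mult .
  then have "real N * ((\<Prod>j<d. real q^j) * (\<Prod>i<d. real q^(i+1+0) - 1))
     \<le> (\<Prod>j<d. real q^j) * (\<Prod>i<d. real q^(i+1+2) - 1)"
    using Pfac[of q d 0] Pfac[of q d 2] q2 by simp
  moreover have Qpos: "(\<Prod>j<d. real q^j) > 0" using q2 by (intro prod_pos) auto
  ultimately have ineq: "real N * (\<Prod>i<d. real q^(i+1) - 1) \<le> (\<Prod>i<d. real q^(i+1+2) - 1)"
    by (simp add: mult.left_commute[of "real N"])
  have R0pos: "(\<Prod>i<d. real q^(i+1) - 1) > 0"
  proof (intro prod_pos ballI)
    fix i assume "i \<in> {..<d}"
    have a: "real q ^ (i+1) \<ge> real q ^ 1" using q2 by (intro power_increasing) auto
    have b: "real q \<ge> 2" using q2 by simp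
    show "real q^(i+1) - 1 > 0" using a[unfolded power_one_right] b by linarith
  qed
  have den: "(real q - 1) * (real q ^ 2 - 1) > 0"
  proof -
    have "real q ^ 2 \<ge> 4" using q2 power_mono[of 2 "real q" 2] by simp
    then show ?thesis using q2 by simp
  qed
  have "real N * (\<Prod>i<d. real q^(i+1) - 1) * ((real q - 1) * (real q ^ 2 - 1))
      \<le> (\<Prod>i<d. real q^(i+1+2) - 1) * ((real q - 1) * (real q ^ 2 - 1))"
    using ineq den by (intro mult_right_mono) auto
  also have "\<dots> = (\<Prod>i<d. real q^(i+1) - 1) * ((real q^(d+1)-1)*(real q^(d+2)-1))" by (rule Rrec)
  finally have "real N * ((real q - 1) * (real q ^ 2 - 1)) \<le> (real q^(d+1)-1)*(real q^(d+2)-1)"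
    using R0pos by (simp add: mult.commute mult.left_commute)
  then have "real N \<le> (real q^(d+2)-1)*(real q^(d+1)-1) / ((real q - 1) * (real q ^ 2 - 1))"
    using den by (simp add: pos_le_divide_eq mult.commute)
  moreover have "real q^(n+1) = real q^(d+2)" "real q^n = real q^(d+1)" using nd by simp_all
  ultimately show ?thesis unfolding N_def[symmetric] q_def[symmetric] by simp
qed

lemma binom_lower:
  assumes "k \<le> m"
  shows "(real m - real k + 1) ^ k \<le> real (m choose k) * fact k"
proof -
  have "real (m choose k) * fact k = (\<Prod>i = 0..<k. real (m - i) / real (k - i)) * (\<Prod>i = 0..<k. real (k - i))"
    using assms by (simp add: binomial_altdef_of_nat fact_prod_rev[of k] of_nat_prod)
  also have "\<dots> = (\<Prod>i = 0..<k. real (m - i) / real (k - i) * real (k - i))"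
    by (rule prod.distrib[symmetric])
  also have "\<dots> = (\<Prod>i = 0..<k. real (m - i))"
    by (rule prod.cong[OF refl]) auto
  finally have eq: "real (m choose k) * fact k = (\<Prod>i = 0..<k. real (m - i))" .
  have "(real m - real k + 1) ^ k = (\<Prod>i = 0..<k. real m - real k + 1)" by simp
  also have "\<dots> \<le> (\<Prod>i = 0..<k. real (m - i))"
  proof (rule prod_mono)
    fix i assume "i \<in> {0..<k}"
    then show "0 \<le> real m - real k + 1 \<and> real m - real k + 1 \<le> real (m - i)"
      using assms by (auto simp: of_nat_diff)
  qed
  finally show ?thesis using eq by simp
qed

lemma extend_indep:
  fixes B :: "(nat \<Rightarrow> 'a::{finite,field}) set"
  assumes B: "B \<subseteq> vecs n" "V.independent B" and t: "card B \<le> t" "t \<le> n + 1"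
  obtains B' where "B \<subseteq> B'" "B' \<subseteq> vecs n" "V.independent B'" "card B' = t"
proof -
  obtain Bf where Bf: "B \<subseteq> Bf" "Bf \<subseteq> vecs n" "V.independent Bf" "vecs n \<subseteq> V.span Bf"
    using V.maximal_independent_subset_extend[OF B] by blast
  have finBf: "finite Bf" using finite_subset[OF Bf(2) finite_vecs] .
  have "V.span Bf \<subseteq> vecs n" using Bf(2) subspace_vecs by (rule V.span_minimal)
  then have "V.span Bf = vecs n" using Bf(4) by blast
  then have eqp: "CARD('a) ^ card Bf = CARD('a) ^ (n+1)"
    using card_span[OF finBf Bf(3)] card_vecs[of n, where 'a='a] by simp
  have one_less: "1 < CARD('a)" using card_field_ge2[where 'a='a] by linarith
  have cBf: "card Bf = n + 1"
    using power_inject_exp[OF one_less, of "card Bf" "n+1"] eqp by blast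
  have finB: "finite B" using finite_subset[OF Bf(1) finBf] .
  have "card (Bf - B) = n + 1 - card B" using cBf finB Bf(1) by (simp add: card_Diff_subset)
  then have "t - card B \<le> card (Bf - B)" using t by simp
  then obtain C where C: "C \<subseteq> Bf - B" "card C = t - card B" "finite C"
    by (rule obtain_subset_with_card_n)
  show ?thesis
  proof
    show "B \<subseteq> B \<union> C" by blast
    show "B \<union> C \<subseteq> vecs n" using C(1) Bf(1,2) by blast
    show "V.independent (B \<union> C)" using Bf(3) by (rule V.independent_mono) (use C(1) Bf(1) in blast)
    have "card (B \<union> C) = card B + card C" using C finB by (intro card_Un_disjoint) auto
    then show "card (B \<union> C) = t" using C(2) t by simp
  qed
qed

lemma exists_W:
  fixes T :: "(nat \<Rightarrow> 'a::{finite,field}) set set"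
  assumes T: "T \<subseteq> PG_points n" "finite T" "card T \<le> n - 1" and n: "n \<ge> 2"
  shows "\<exists>W. proj_subspace n (n-2) W \<and> (\<forall>P\<in>T. P \<subseteq> W)"
proof -
  have "\<forall>P\<in>T. \<exists>B. B \<subseteq> P \<and> V.independent B \<and> P \<subseteq> V.span B \<and> card B = V.dim P"
    using V.basis_exists by metis
  then obtain bP where bP: "\<And>P. P \<in> T \<Longrightarrow> bP P \<subseteq> P \<and> V.independent (bP P) \<and> P \<subseteq> V.span (bP P) \<and> card (bP P) = V.dim P"
    by metis
  have Pv: "P \<subseteq> vecs n" "V.dim P = 1" if "P \<in> T" for P
    using that T(1) by (auto simp: PG_points_def proj_subspace_def)
  define C where "C = (\<Union>P\<in>T. bP P)"
  have Cv: "C \<subseteq> vecs n" unfolding C_def using bP Pv by blast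
  have finC: "finite C" using finite_subset[OF Cv finite_vecs] .
  have "card C \<le> (\<Sum>P\<in>T. card (bP P))" unfolding C_def by (rule card_UN_le[OF T(2)])
  also have "\<dots> = (\<Sum>P\<in>T. 1)" using bP Pv by (intro sum.cong) auto
  also have "\<dots> = card T" by simp
  finally have cC: "card C \<le> n - 1" using T(3) by simp
  obtain B0 where B0: "B0 \<subseteq> C" "V.independent B0" "C \<subseteq> V.span B0"
    using V.maximal_independent_subset[of C] by blast
  have cb0: "card B0 \<le> n - 1" using card_mono[OF finC B0(1)] cC by simp
  have B0v: "B0 \<subseteq> vecs n" using B0(1) Cv by blast
  have le: "n - 1 \<le> n + 1" by simp
  obtain B' where B': "B0 \<subseteq> B'" "B' \<subseteq> vecs n" "V.independent B'" "card B' = n - 1"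
    using extend_indep[OF B0v B0(2) cb0 le] by blast
  define W where "W = V.span B'"
  have "proj_subspace n (n-2) W"
    unfolding proj_subspace_def W_def
  proof (intro conjI)
    show "V.span B' \<subseteq> vecs n" using B'(2) subspace_vecs by (rule V.span_minimal)
    show "V.subspace (V.span B')" by simp
    show "V.dim (V.span B') = n - 2 + 1" using V.dim_span_eq_card_independent[OF B'(3)] B'(4) n by simp
  qed
  moreover have "\<forall>P\<in>T. P \<subseteq> W"
  proof
    fix P assume P: "P \<in> T"
    have "P \<subseteq> V.span (bP P)" using bP[OF P] by blast
    also have "\<dots> \<subseteq> V.span C" using P unfolding C_def by (intro V.span_mono) blast
    also have "\<dots> \<subseteq> V.span B0" using B0(3) by (intro V.span_minimal) auto
    also have "\<dots> \<subseteq> W" unfolding W_def using B'(1) by (rule V.span_mono)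
    finally show "P \<subseteq> W" .
  qed
  ultimately show ?thesis by blast
qed

theorem mainTheorem1:
  fixes X :: "(nat \<Rightarrow> 'a::{finite,field}) set set" and n :: nat
  assumes "n \<ge> 3"
    and "rs_set n n (n - 2) X"
  shows "real (card X) \<le>
    (real (fact n) * (real (card (UNIV :: 'a set)) ^ (n + 1) - 1) * (real (card (UNIV :: 'a set)) ^ n - 1)
      / ((real (card (UNIV :: 'a set)) - 1) * (real (card (UNIV :: 'a set)) ^ 2 - 1))) powr (1 / (real n - 1))
    + real n - 2"
proof -
  define q where "q = real (card (UNIV :: 'a set))"
  define G where "G = real (fact n) * (q ^ (n + 1) - 1) * (q ^ n - 1) / ((q - 1) * (q ^ 2 - 1))"
  have n3: "n \<ge> 3" by fact
  have Xsub: "X \<subseteq> PG_points n" and bnd: "\<And>W. proj_subspace n (n-2) W \<Longrightarrow> pts_in X W \<le> n"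
    using assms(2) unfolding rs_set_def by auto
  have "X \<subseteq> Pow (vecs n)" using Xsub by (auto simp: PG_points_def proj_subspace_def)
  then have finX: "finite X" using finite_subset finite_vecs by (metis finite_Pow_iff)
  define WW where "WW = {W :: (nat \<Rightarrow> 'a) set. proj_subspace n (n-2) W}"
  have "WW \<subseteq> Pow (vecs n)" by (auto simp: WW_def proj_subspace_def)
  then have finWW: "finite WW" using finite_subset finite_vecs by (metis finite_Pow_iff)
  define k where "k = n - 1"
  define TT where "TT = {T. T \<subseteq> X \<and> card T = k}"
  define S where "S W = {T. T \<subseteq> {P \<in> X. P \<subseteq> W} \<and> card T = k}" for W
  have TTsub: "TT \<subseteq> (\<Union>W\<in>WW. S W)"
  proof
    fix T assume T: "T \<in> TT"
    then have T1: "T \<subseteq> X" "card T = k" by (auto simp: TT_def)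
    have finT: "finite T" using finite_subset[OF T1(1) finX] .
    obtain W where W: "proj_subspace n (n-2) W" "\<forall>P\<in>T. P \<subseteq> W"
      using exists_W[of T n] T1 Xsub finT n3 unfolding k_def by auto
    then show "T \<in> (\<Union>W\<in>WW. S W)" using T1 by (auto simp: WW_def S_def)
  qed
  have finS: "finite (S W)" for W
    by (rule finite_subset[of _ "Pow X"]) (auto simp: S_def finX)
  have "card TT \<le> card (\<Union>W\<in>WW. S W)"
    by (rule card_mono[OF _ TTsub]) (simp add: finWW finS)
  also have "\<dots> \<le> (\<Sum>W\<in>WW. card (S W))" by (rule card_UN_le[OF finWW])
  also have "\<dots> \<le> (\<Sum>W\<in>WW. n)"
  proof (rule sum_mono)
    fix W assume W: "W \<in> WW"
    have "card (S W) = pts_in X W choose k" unfolding S_def pts_in_def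
      by (rule n_subsets) (simp add: finX)
    also have "\<dots> \<le> n choose k" using bnd W by (intro binomial_right_mono) (simp add: WW_def)
    also have "\<dots> = n" using n3 binomial_symmetric[of k n] by (simp add: k_def)
    finally show "card (S W) \<le> n" .
  qed
  also have "\<dots> = n * card WW" by simp
  finally have cTT: "card TT \<le> n * card WW" .
  have cTT': "card TT = card X choose k" unfolding TT_def by (rule n_subsets[OF finX])
  define H where "H = (q ^ (n + 1) - 1) * (q ^ n - 1) / ((q - 1) * (q ^ 2 - 1))"
  have GH: "G = real (fact n) * H" unfolding G_def H_def by simp
  have NH: "real (card WW) \<le> H"
    using count_bound[of n, where 'a='a] n3 unfolding WW_def q_def H_def by simp
  have NG: "real (fact n) * real (card WW) \<le> G" unfolding GH
    using NH by (intro mult_left_mono) auto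
  have Gnn: "G \<ge> 0" using NG by (meson order_trans zero_le_mult_iff of_nat_0_le_iff fact_ge_zero)
  show ?thesis
  proof (cases "card X \<le> n - 2")
    case True
    have "real (card X) \<le> real n - 2" using True n3 by linarith
    moreover have "G powr (1 / (real n - 1)) \<ge> 0" by simp
    ultimately show ?thesis unfolding G_def[symmetric] q_def[symmetric] by linarith
  next
    case False
    define m where "m = card X"
    have km: "k \<le> m" using False n3 unfolding m_def k_def by linarith
    define a where "a = real m - real k + 1"
    have apos: "a > 0" using km unfolding a_def by simp
    have "a ^ k \<le> real (m choose k) * fact k" unfolding a_def by (rule binom_lower[OF km])
    also have "\<dots> \<le> real (n * card WW) * fact k"
    proof (rule mult_right_mono)
      have "m choose k \<le> n * card WW" using cTT cTT' unfolding m_def by simp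
      then show "real (m choose k) \<le> real (n * card WW)" by (simp only: of_nat_le_iff)
    qed simp
    also have "\<dots> = real (fact n) * real (card WW)"
    proof -
      have "n = Suc k" using n3 unfolding k_def by simp
      then have "(fact n :: real) = real n * fact k" by (simp add: fact_Suc)
      then show ?thesis by simp
    qed
    also have "\<dots> \<le> G" by (rule NG)
    finally have akG: "a ^ k \<le> G" .
    have kpos: "real k > 0" using n3 unfolding k_def by simp
    have "a = (a ^ k) powr (1 / real k)"
    proof -
      have "(a ^ k) powr (1 / real k) = (a powr real k) powr (1 / real k)"
        using apos by (simp add: powr_realpow)
      also have "\<dots> = a powr (real k * (1 / real k))" by (simp add: powr_powr)
      also have "\<dots> = a" using kpos apos by simp
      finally show ?thesis by simp
    qed
    also have "\<dots> \<le> G powr (1 / real k)"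
      using akG apos by (intro powr_mono2) auto
    finally have aG: "a \<le> G powr (1 / real k)" .
    have "real n - 1 = real k" using n3 unfolding k_def by simp
    then have "real (card X) \<le> G powr (1 / (real n - 1)) + real n - 2"
      using aG unfolding a_def m_def by simp
    then show ?thesis unfolding G_def q_def .
  qed
qed

end
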